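(* Let $R$ be a Noetherian ring of prime characteristic $p>0$, let $N\in\mathbb{N}$, and let $\{I_n\}_{n\in\mathbb{N}}$ be a collection of ideals of $R$ each generated by $N$ elements. Let $\mathcal{F}$ be a non-principal ultrafilter on $\mathbb{N}$. Then, as ideals of the ultrapower $R_\natural$, \[ \Big(\operatorname{ulim}_{n\to\mathcal{F}} I_n\Big)^F\subseteq \operatorname{ulim}_{n\to\mathcal{F}}\big(I_n^F\big). \]
   Context: A non-principal ultrafilter $\mathcal{F}$ on $\mathbb{N}$ is a collection of subsets of $\mathbb{N}$ not containing $\varnothing$, closed under supersets and finite intersections, containing $A$ or $\mathbb{N}\setminus A$ for every $A\subseteq\mathbb{N}$, and containing no finite set. The ultrapower $R_\natural$ is $\prod_{n\in\mathbb{N}}R$ modulo the relation $(a_n)\sim(b_n)$ iff $\{n\mid a_n=b_n\}\in\mathcal{F}$, with componentwise ring operations; the class of $(a_n)$ is written $\operatorname{ulim} a_n$. For ideals $I_n\subseteq R$, $\operatorname{ulim}_{n\to\mathcal{F}} I_n$ is the ideal of $R_\natural$ consisting of classes $\operatorname{ulim} a_n$ with $\{n\mid a_n\in I_n\}\in\mathcal{F}$. For an ideal $I$ of a ring $S$ of characteristic $p$, $I^{[p^e]}$ is the ideal generated by $\{r^{p^e}\mid r\in I\}$, and the Frobenius closure is $I^F=\{r\in S\mid r^{p^e}\in I^{[p^e]}\text{ for all } e\gg0\}$. *)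

theory Defs
  imports "HOL-Algebra.Algebra"
begin

definition nonprincipal_ultrafilter :: "nat set set \<Rightarrow> bool" where
  "nonprincipal_ultrafilter F \<longleftrightarrow>
     {} \<notin> F \<and>
     (\<forall>A B. A \<in> F \<and> A \<subseteq> B \<longrightarrow> B \<in> F) \<and>
     (\<forall>A B. A \<in> F \<and> B \<in> F \<longrightarrow> A \<inter> B \<in> F) \<and>
     (\<forall>A. A \<in> F \<or> (UNIV - A) \<in> F) \<and>
     (\<forall>A. finite A \<longrightarrow> A \<notin> F)"

definition has_prime_char :: "('a, 'b) ring_scheme \<Rightarrow> nat \<Rightarrow> bool" where
  "has_prime_char R p \<longleftrightarrow> Factorial_Ring.prime p \<and> \<one>\<^bsub>R\<^esub> \<noteq> \<zero>\<^bsub>R\<^esub> \<and> [p] \<cdot>\<^bsub>R\<^esub> \<one>\<^bsub>R\<^esub> = \<zero>\<^bsub>R\<^esub>"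

definition useqs :: "('a, 'b) ring_scheme \<Rightarrow> (nat \<Rightarrow> 'a) set" where
  "useqs R = {a. \<forall>n. a n \<in> carrier R}"

definition uequiv :: "('a, 'b) ring_scheme \<Rightarrow> nat set set \<Rightarrow> ((nat \<Rightarrow> 'a) \<times> (nat \<Rightarrow> 'a)) set" where
  "uequiv R F = {(a, b). a \<in> useqs R \<and> b \<in> useqs R \<and> {n. a n = b n} \<in> F}"

definition ulim :: "('a, 'b) ring_scheme \<Rightarrow> nat set set \<Rightarrow> (nat \<Rightarrow> 'a) \<Rightarrow> (nat \<Rightarrow> 'a) set" where
  "ulim R F a = uequiv R F `` {a}"

definition urep :: "(nat \<Rightarrow> 'a) set \<Rightarrow> nat \<Rightarrow> 'a" where
  "urep S = (SOME x. x \<in> S)"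

definition ultrapower :: "('a, 'b) ring_scheme \<Rightarrow> nat set set \<Rightarrow> ((nat \<Rightarrow> 'a) set) ring" where
  "ultrapower R F =
     \<lparr>carrier = useqs R // uequiv R F,
      Group.monoid.mult = (\<lambda>U V. ulim R F (\<lambda>n. monoid.mult R (urep U n) (urep V n))),
      Group.monoid.one = ulim R F (\<lambda>n. monoid.one R),
      Ring.ring.zero = ulim R F (\<lambda>n. ring.zero R),
      Ring.ring.add = (\<lambda>U V. ulim R F (\<lambda>n. ring.add R (urep U n) (urep V n)))\<rparr>"

definition ulim_ideal :: "('a, 'b) ring_scheme \<Rightarrow> nat set set \<Rightarrow> (nat \<Rightarrow> 'a set) \<Rightarrow> (nat \<Rightarrow> 'a) set set" where
  "ulim_ideal R F I =
     {C \<in> carrier (ultrapower R F). \<exists>a \<in> C. {n. a n \<in> I n} \<in> F}"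

definition frob_power :: "('a, 'b) ring_scheme \<Rightarrow> 'a set \<Rightarrow> nat \<Rightarrow> 'a set" where
  "frob_power S I q = Idl\<^bsub>S\<^esub> ((\<lambda>r. r [^]\<^bsub>S\<^esub> q) ` I)"

definition frob_closure :: "('a, 'b) ring_scheme \<Rightarrow> nat \<Rightarrow> 'a set \<Rightarrow> 'a set" where
  "frob_closure S p I =
     {r \<in> carrier S. \<exists>e0. \<forall>e\<ge>e0. r [^]\<^bsub>S\<^esub> (p ^ e) \<in> frob_power S I (p ^ e)}"

end

theory Submission
  imports Defs
begin

context cring begin
lemma binom:
  assumes x: "x \<in> carrier R" and y: "y \<in> carrier R"
  shows "(x \<oplus> y) [^] n = (\<Oplus>k\<in>{..n}. add_pow R (n choose k) (x [^] k \<otimes> y [^] (n - k)))"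
proof (induction n)
  case 0 thus ?case using x y by simp
next
  case (Suc n)
  define A where "A = (\<Oplus>k\<in>{..n}. add_pow R (n choose k) (x [^] Suc k \<otimes> y [^] (n - k)))"
  define h where "h k = add_pow R (n choose k) (x [^] k \<otimes> y [^] (Suc n - k))" for k
  define c where "c k = add_pow R (n choose Suc k) (x [^] Suc k \<otimes> y [^] (n - k))" for k
  have hx: "\<And>k j :: nat. (x [^] k \<otimes> y [^] j) \<otimes> x = x [^] Suc k \<otimes> y [^] j"
  proof -
    fix k j :: nat
    have "(x [^] k \<otimes> y [^] j) \<otimes> x = x [^] k \<otimes> (y [^] j \<otimes> x)" using x y by (simp add: m_assoc)
    also have "\<dots> = x [^] k \<otimes> (x \<otimes> y [^] j)" using x y by (simp add: m_comm)
    also have "\<dots> = (x [^] k \<otimes> x) \<otimes> y [^] j" using x y by (simp add: m_assoc)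
    finally show "(x [^] k \<otimes> y [^] j) \<otimes> x = x [^] Suc k \<otimes> y [^] j" by simp
  qed
  have Ac: "A \<in> carrier R" unfolding A_def using x y by (simp add: finsum_closed Pi_def)
  have cc: "finsum R c {..n} \<in> carrier R" unfolding c_def using x y by (simp add: finsum_closed Pi_def)
  have hc: "h \<in> {..Suc n} \<rightarrow> carrier R" using x y by (auto simp: h_def)
  have "(x \<oplus> y) [^] Suc n = (x \<oplus> y) [^] n \<otimes> (x \<oplus> y)" by simp
  also have "\<dots> = (\<Oplus>k\<in>{..n}. add_pow R (n choose k) (x [^] k \<otimes> y [^] (n - k))) \<otimes> x
       \<oplus> (\<Oplus>k\<in>{..n}. add_pow R (n choose k) (x [^] k \<otimes> y [^] (n - k))) \<otimes> y"
    using Suc x y by (simp add: r_distr finsum_closed Pi_def)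
  also have "(\<Oplus>k\<in>{..n}. add_pow R (n choose k) (x [^] k \<otimes> y [^] (n - k))) \<otimes> x = A"
  proof -
    have "(\<Oplus>k\<in>{..n}. add_pow R (n choose k) (x [^] k \<otimes> y [^] (n - k))) \<otimes> x
        = (\<Oplus>k\<in>{..n}. add_pow R (n choose k) (x [^] k \<otimes> y [^] (n - k)) \<otimes> x)"
      using x y by (simp add: finsum_ldistr Pi_def)
    also have "\<dots> = A" unfolding A_def
      using x y by (intro finsum_cong) (auto simp: Pi_def add_pow_ldistr hx del: nat_pow_Suc)
    finally show ?thesis .
  qed
  also have "(\<Oplus>k\<in>{..n}. add_pow R (n choose k) (x [^] k \<otimes> y [^] (n - k))) \<otimes> y = finsum R h {..n}"
  proof -
    have "(\<Oplus>k\<in>{..n}. add_pow R (n choose k) (x [^] k \<otimes> y [^] (n - k))) \<otimes> y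
        = (\<Oplus>k\<in>{..n}. add_pow R (n choose k) (x [^] k \<otimes> y [^] (n - k)) \<otimes> y)"
      using x y by (simp add: finsum_ldistr Pi_def)
    also have "\<dots> = finsum R h {..n}" unfolding h_def
      using x y by (intro finsum_cong) (auto simp: Pi_def add_pow_ldistr m_assoc Suc_diff_le)
    finally show ?thesis .
  qed
  also have "finsum R h {..n} = finsum R h {..Suc n}"
    using hc finsum_Suc[OF hc] x y by (simp add: h_def finsum_closed Pi_def binomial_eq_0)
  also have "\<dots> = (\<Oplus>k\<in>{..n}. h (Suc k)) \<oplus> h 0"
    by (rule finsum_Suc2[OF hc])
  also have "(\<Oplus>k\<in>{..n}. h (Suc k)) = finsum R c {..n}"
    unfolding h_def c_def by (intro finsum_cong) (auto simp: Pi_def x y)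
  also have "h 0 = y [^] Suc n" using x y by (simp add: h_def)
  finally have L: "(x \<oplus> y) [^] Suc n = A \<oplus> (finsum R c {..n} \<oplus> y [^] Suc n)"
    using x y Ac cc by (simp add: a_assoc)
  define t where "t k = add_pow R (Suc n choose k) (x [^] k \<otimes> y [^] (Suc n - k))" for k
  have tc: "t \<in> {..Suc n} \<rightarrow> carrier R" using x y by (auto simp: t_def)
  have "(\<Oplus>k\<in>{..Suc n}. t k) = (\<Oplus>k\<in>{..n}. t (Suc k)) \<oplus> t 0"
    by (rule finsum_Suc2[OF tc])
  also have "(\<Oplus>k\<in>{..n}. t (Suc k)) = (\<Oplus>k\<in>{..n}. add_pow R (n choose k) (x [^] Suc k \<otimes> y [^] (n - k)) \<oplus> c k)"
    unfolding t_def c_def using x y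
    by (intro finsum_cong) (auto simp: Pi_def add.nat_pow_mult)
  also have "\<dots> = A \<oplus> finsum R c {..n}"
    unfolding A_def using x y by (intro finsum_addf) (auto simp: Pi_def c_def)
  also have "t 0 = y [^] Suc n" using x y by (simp add: t_def)
  finally have "(\<Oplus>k\<in>{..Suc n}. t k) = A \<oplus> (finsum R c {..n} \<oplus> y [^] Suc n)"
    using x y Ac cc by (simp add: a_assoc)
  with L show ?case by (simp add: t_def)
qed

lemma char_zero_mult:
  fixes p c :: nat
  assumes "add_pow R p \<one> = \<zero>" "z \<in> carrier R" "p dvd c"
  shows "add_pow R c z = \<zero>"
proof -
  obtain m where c: "c = p * m" using assms(3) by blast
  have "add_pow R p z = (add_pow R p \<one>) \<otimes> z" using assms(2) by (simp add: add_pow_ldistr)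
  also have "\<dots> = \<zero>" using assms by simp
  finally have "add_pow R p z = \<zero>" .
  moreover have "add_pow R (p * m) z = add_pow R m (add_pow R p z)"
    by (rule add.nat_pow_pow[symmetric]) (rule assms(2))
  ultimately show ?thesis using c by simp
qed

lemma frob_add:
  fixes p :: nat
  assumes p: "Factorial_Ring.prime p" and ch: "add_pow R p \<one> = \<zero>" and x: "x \<in> carrier R" and y: "y \<in> carrier R"
  shows "(x \<oplus> y) [^] p = x [^] p \<oplus> y [^] p"
proof -
  define f where "f k = add_pow R (p choose k) (x [^] k \<otimes> y [^] (p - k))" for k
  have fc: "\<And>n. f \<in> {..n} \<rightarrow> carrier R" using x y by (auto simp: f_def)
  obtain m where m: "p = Suc (Suc m)" using prime_ge_2_nat[OF p]
    by (metis add_2_eq_Suc le_Suc_ex)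
  have z: "f (Suc k) = \<zero>" if "k \<le> m" for k
  proof -
    have "Suc k < p" using that m by simp
    then have "p dvd (p choose Suc k)" using p by (intro dvd_choose_prime) auto
    then show ?thesis unfolding f_def using x y by (intro char_zero_mult[OF ch]) auto
  qed
  have "(x \<oplus> y) [^] p = finsum R f {..p}" unfolding f_def by (rule binom[OF x y])
  also have "\<dots> = finsum R f {..Suc (Suc m)}" by (simp only: m)
  also have "\<dots> = f (Suc (Suc m)) \<oplus> finsum R f {..Suc m}" by (rule finsum_Suc[OF fc])
  also have "finsum R f {..Suc m} = (\<Oplus>k\<in>{..m}. f (Suc k)) \<oplus> f 0" by (rule finsum_Suc2[OF fc])
  also have "(\<Oplus>k\<in>{..m}. f (Suc k)) = (\<Oplus>k\<in>{..m}. \<zero>)" by (intro finsum_cong) (auto simp: z)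
  also have "\<dots> = \<zero>" by simp
  also have "f (Suc (Suc m)) = x [^] p" using x y m by (simp add: f_def)
  also have "f 0 = y [^] p" using x y m by (simp add: f_def)
  finally show ?thesis using x y by (simp add: a_comm)
qed

lemma frob_Idl:
  fixes p :: nat
  assumes p: "Factorial_Ring.prime p" and ch: "add_pow R p \<one> = \<zero>" and S: "S \<subseteq> carrier R" and xS: "x \<in> Idl S"
  shows "x [^] p \<in> Idl ((\<lambda>s. s [^] p) ` S)"
proof -
  define J where "J = Idl ((\<lambda>s. s [^] p) ` S)"
  have Jid: "ideal J R" unfolding J_def using S by (intro genideal_ideal) auto
  interpret J: ideal J R by (rule Jid)
  obtain m where m: "p = Suc m" using prime_gt_0_nat[OF p] by (metis gr0_implies_Suc)
  define A where "A = {z \<in> carrier R. z [^] p \<in> J}"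
  have mulA: "x \<otimes> a \<in> A" if "a \<in> A" "x \<in> carrier R" for a x
  proof -
    have "(x \<otimes> a) [^] p = x [^] p \<otimes> a [^] p" using that by (simp add: A_def pow_mult_distrib m_comm)
    then show ?thesis using that J.I_l_closed by (simp add: A_def)
  qed
  have "ideal A R"
  proof (rule idealI)
    show "ring R" by (rule ring_axioms)
    show "subgroup A (add_monoid R)"
    proof (rule add.subgroupI)
      show "A \<subseteq> carrier R" by (auto simp: A_def)
      have "\<zero> [^] p = \<zero>" using m by simp
      then show "A \<noteq> {}" unfolding A_def using J.zero_closed by auto
      fix a assume a: "a \<in> A"
      have "\<ominus> a = (\<ominus> \<one>) \<otimes> a" using a by (simp add: A_def l_minus)
      then show "\<ominus> a \<in> A" using mulA[OF a] by simp
    next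
      fix a b assume a: "a \<in> A" and b: "b \<in> A"
      then show "a \<oplus> b \<in> A"
        using J.a_closed by (simp add: A_def frob_add[OF p ch])
    qed
    show "\<And>a x. a \<in> A \<Longrightarrow> x \<in> carrier R \<Longrightarrow> x \<otimes> a \<in> A" by (rule mulA)
    show "\<And>a x. a \<in> A \<Longrightarrow> x \<in> carrier R \<Longrightarrow> a \<otimes> x \<in> A"
      using mulA by (metis A_def m_comm mem_Collect_eq)
  qed
  moreover have "S \<subseteq> A" unfolding A_def J_def using S genideal_self[of "(\<lambda>s. s [^] p) ` S"] by auto
  ultimately have "Idl S \<subseteq> A" by (rule genideal_minimal)
  then show ?thesis using xS by (auto simp: A_def J_def)
qed

lemma frob_iter:
  fixes p :: nat
  assumes p: "Factorial_Ring.prime p" and ch: "add_pow R p \<one> = \<zero>" and S: "S \<subseteq> carrier R" and x: "x \<in> carrier R"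
    and xS: "x [^] q \<in> Idl ((\<lambda>s. s [^] q) ` S)"
  shows "x [^] (q * p ^ k) \<in> Idl ((\<lambda>s. s [^] (q * p ^ k)) ` S)"
proof (induction k)
  case 0 then show ?case using xS by simp
next
  case (Suc k)
  have Sk: "(\<lambda>s. s [^] (q * p ^ k)) ` S \<subseteq> carrier R" using S by auto
  have "(x [^] (q * p ^ k)) [^] p \<in> Idl ((\<lambda>s. s [^] p) ` (\<lambda>s. s [^] (q * p ^ k)) ` S)"
    by (rule frob_Idl[OF p ch Sk Suc])
  moreover have "(\<lambda>s. s [^] p) ` (\<lambda>s. s [^] (q * p ^ k)) ` S = (\<lambda>s. s [^] (q * p ^ Suc k)) ` S"
    unfolding image_image using S by (intro image_cong) (auto simp: nat_pow_pow mult.assoc power_Suc2 simp del: power_Suc)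
  ultimately show ?case using x by (simp add: nat_pow_pow mult.assoc power_Suc2 del: power_Suc)
qed
end

locale ultra = cring R for R (structure) +
  fixes F :: "nat set set"
  assumes nu: "nonprincipal_ultrafilter F"
begin

abbreviation "U \<equiv> ultrapower R F"
abbreviation "cl \<equiv> ulim R F"

lemma F_UNIV: "UNIV \<in> F" using nu unfolding nonprincipal_ultrafilter_def by force
lemma F_sup: "A \<in> F \<Longrightarrow> B \<in> F \<Longrightarrow> A \<inter> B \<subseteq> C \<Longrightarrow> C \<in> F"
  using nu unfolding nonprincipal_ultrafilter_def by blast
lemma F_mono: "A \<in> F \<Longrightarrow> A \<subseteq> C \<Longrightarrow> C \<in> F"
  using F_sup by blast

lemma useqs_iff [simp]: "a \<in> useqs R \<longleftrightarrow> (\<forall>n. a n \<in> carrier R)"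
  by (simp add: useqs_def)

lemma cl_mem: "b \<in> cl a \<longleftrightarrow> a \<in> useqs R \<and> b \<in> useqs R \<and> {n. a n = b n} \<in> F"
  by (simp add: ulim_def uequiv_def)

lemma self_in: "a \<in> useqs R \<Longrightarrow> a \<in> cl a"
  using F_UNIV by (simp add: cl_mem)

lemma cl_eq: assumes "a \<in> useqs R" "b \<in> useqs R"
  shows "cl a = cl b \<longleftrightarrow> {n. a n = b n} \<in> F"
proof
  assume "cl a = cl b"
  then have "b \<in> cl a" using self_in[OF assms(2)] by simp
  then show "{n. a n = b n} \<in> F" by (simp add: cl_mem)
next
  assume ab: "{n. a n = b n} \<in> F"
  have "c \<in> cl a \<longleftrightarrow> c \<in> cl b" for c
  proof -
    have 1: "{n. b n = c n} \<in> F" if "{n. a n = c n} \<in> F"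
      by (rule F_sup[OF ab that]) auto
    have 2: "{n. a n = c n} \<in> F" if "{n. b n = c n} \<in> F"
      by (rule F_sup[OF ab that]) auto
    show ?thesis using assms 1 2 by (auto simp add: cl_mem)
  qed
  then show "cl a = cl b" by blast
qed

lemma carrier_U: "carrier U = cl ` useqs R"
  by (auto simp: ultrapower_def quotient_def ulim_def)

lemma in_carrierE:
  assumes "C \<in> carrier U" obtains a where "a \<in> useqs R" "C = cl a"
  using assms carrier_U by auto

lemma cl_in [simp]: "a \<in> useqs R \<Longrightarrow> cl a \<in> carrier U"
  by (simp add: carrier_U)

lemma urep: assumes "a \<in> useqs R"
  shows "urep (cl a) \<in> useqs R" "{n. a n = urep (cl a) n} \<in> F"
proof -
  have "urep (cl a) \<in> cl a" unfolding urep_def by (rule someI[of "\<lambda>x. x \<in> cl a" a, OF self_in[OF assms]])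
  then show "urep (cl a) \<in> useqs R" "{n. a n = urep (cl a) n} \<in> F" by (simp_all add: cl_mem)
qed

lemma mult_cl: assumes "a \<in> useqs R" "b \<in> useqs R"
  shows "cl a \<otimes>\<^bsub>U\<^esub> cl b = cl (\<lambda>n. a n \<otimes> b n)"
proof -
  have "{n. urep (cl a) n \<otimes> urep (cl b) n = a n \<otimes> b n} \<in> F"
    by (rule F_sup[OF urep(2)[OF assms(1)] urep(2)[OF assms(2)]]) auto
  then have "cl (\<lambda>n. urep (cl a) n \<otimes> urep (cl b) n) = cl (\<lambda>n. a n \<otimes> b n)"
    using urep[OF assms(1)] urep[OF assms(2)] assms
    by (subst cl_eq) auto
  then show ?thesis by (simp add: ultrapower_def)
qed

lemma add_cl: assumes "a \<in> useqs R" "b \<in> useqs R"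
  shows "cl a \<oplus>\<^bsub>U\<^esub> cl b = cl (\<lambda>n. a n \<oplus> b n)"
proof -
  have "{n. urep (cl a) n \<oplus> urep (cl b) n = a n \<oplus> b n} \<in> F"
    by (rule F_sup[OF urep(2)[OF assms(1)] urep(2)[OF assms(2)]]) auto
  then have "cl (\<lambda>n. urep (cl a) n \<oplus> urep (cl b) n) = cl (\<lambda>n. a n \<oplus> b n)"
    using urep[OF assms(1)] urep[OF assms(2)] assms
    by (subst cl_eq) auto
  then show ?thesis by (simp add: ultrapower_def)
qed

lemma one_U: "\<one>\<^bsub>U\<^esub> = cl (\<lambda>n. \<one>)" by (simp add: ultrapower_def)
lemma zero_U: "\<zero>\<^bsub>U\<^esub> = cl (\<lambda>n. \<zero>)" by (simp add: ultrapower_def)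

lemmas cl_simps = mult_cl add_cl one_U zero_U

lemma ring_U: "ring U"
proof (rule ringI)
  show "abelian_group U"
  proof (rule abelian_groupI)
    fix x y z assume "x \<in> carrier U" "y \<in> carrier U" "z \<in> carrier U"
    then obtain a b c where "a \<in> useqs R" "b \<in> useqs R" "c \<in> useqs R" "x = cl a" "y = cl b" "z = cl c"
      by (metis in_carrierE)
    then show "x \<oplus>\<^bsub>U\<^esub> y \<oplus>\<^bsub>U\<^esub> z = x \<oplus>\<^bsub>U\<^esub> (y \<oplus>\<^bsub>U\<^esub> z)"
      by (simp add: cl_simps a_assoc)
  next
    fix x y assume "x \<in> carrier U" "y \<in> carrier U"
    then obtain a b where "a \<in> useqs R" "b \<in> useqs R" "x = cl a" "y = cl b"
      by (metis in_carrierE)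
    then show "x \<oplus>\<^bsub>U\<^esub> y \<in> carrier U" "x \<oplus>\<^bsub>U\<^esub> y = y \<oplus>\<^bsub>U\<^esub> x"
      by (simp_all add: cl_simps a_comm)
  next
    show "\<zero>\<^bsub>U\<^esub> \<in> carrier U" by (simp add: zero_U)
  next
    fix x assume "x \<in> carrier U"
    then obtain a where a: "a \<in> useqs R" "x = cl a" by (metis in_carrierE)
    then show "\<zero>\<^bsub>U\<^esub> \<oplus>\<^bsub>U\<^esub> x = x" by (simp add: cl_simps)
    have "cl (\<lambda>n. \<ominus> a n) \<oplus>\<^bsub>U\<^esub> x = \<zero>\<^bsub>U\<^esub>" using a by (simp add: cl_simps l_neg)
    then show "\<exists>y\<in>carrier U. y \<oplus>\<^bsub>U\<^esub> x = \<zero>\<^bsub>U\<^esub>" using a by (intro bexI[of _ "cl (\<lambda>n. \<ominus> a n)"]) auto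
  qed
next
  show "monoid U"
  proof (rule monoidI)
    fix x y z assume "x \<in> carrier U" "y \<in> carrier U" "z \<in> carrier U"
    then obtain a b c where "a \<in> useqs R" "b \<in> useqs R" "c \<in> useqs R" "x = cl a" "y = cl b" "z = cl c"
      by (metis in_carrierE)
    then show "x \<otimes>\<^bsub>U\<^esub> y \<otimes>\<^bsub>U\<^esub> z = x \<otimes>\<^bsub>U\<^esub> (y \<otimes>\<^bsub>U\<^esub> z)"
      by (simp add: cl_simps m_assoc)
  next
    fix x y assume "x \<in> carrier U" "y \<in> carrier U"
    then obtain a b where "a \<in> useqs R" "b \<in> useqs R" "x = cl a" "y = cl b"
      by (metis in_carrierE)
    then show "x \<otimes>\<^bsub>U\<^esub> y \<in> carrier U" by (simp add: cl_simps)
  next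
    show "\<one>\<^bsub>U\<^esub> \<in> carrier U" by (simp add: one_U)
  next
    fix x assume "x \<in> carrier U"
    then obtain a where a: "a \<in> useqs R" "x = cl a" by (metis in_carrierE)
    then show "\<one>\<^bsub>U\<^esub> \<otimes>\<^bsub>U\<^esub> x = x" "x \<otimes>\<^bsub>U\<^esub> \<one>\<^bsub>U\<^esub> = x" by (simp_all add: cl_simps)
  qed
next
  fix x y z assume "x \<in> carrier U" "y \<in> carrier U" "z \<in> carrier U"
  then obtain a b c where "a \<in> useqs R" "b \<in> useqs R" "c \<in> useqs R" "x = cl a" "y = cl b" "z = cl c"
    by (metis in_carrierE)
  then show "(x \<oplus>\<^bsub>U\<^esub> y) \<otimes>\<^bsub>U\<^esub> z = x \<otimes>\<^bsub>U\<^esub> z \<oplus>\<^bsub>U\<^esub> y \<otimes>\<^bsub>U\<^esub> z"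
    "z \<otimes>\<^bsub>U\<^esub> (x \<oplus>\<^bsub>U\<^esub> y) = z \<otimes>\<^bsub>U\<^esub> x \<oplus>\<^bsub>U\<^esub> z \<otimes>\<^bsub>U\<^esub> y"
    by (simp_all add: cl_simps l_distr r_distr)
qed

lemma pow_cl: assumes "a \<in> useqs R"
  shows "cl a [^]\<^bsub>U\<^esub> (k::nat) = cl (\<lambda>n. a n [^] k)"
proof (induction k)
  case 0 then show ?case by (simp add: one_U)
next
  case (Suc k) then show ?case using assms by (simp add: mult_cl)
qed

lemma ulim_ideal_mem: assumes "a \<in> useqs R"
  shows "cl a \<in> ulim_ideal R F J \<longleftrightarrow> {n. a n \<in> J n} \<in> F"
proof
  assume "cl a \<in> ulim_ideal R F J"
  then obtain b where b: "b \<in> cl a" "{n. b n \<in> J n} \<in> F" by (auto simp: ulim_ideal_def)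
  then have "{n. a n = b n} \<in> F" by (simp add: cl_mem)
  with b(2) show "{n. a n \<in> J n} \<in> F" by (rule F_sup) auto
next
  assume "{n. a n \<in> J n} \<in> F"
  then show "cl a \<in> ulim_ideal R F J" using assms self_in[OF assms] by (auto simp: ulim_ideal_def)
qed

lemma ulim_ideal_rep:
  assumes "C \<in> ulim_ideal R F J"
  shows "\<exists>a. a \<in> useqs R \<and> C = cl a \<and> {n. a n \<in> J n} \<in> F"
proof -
  have Cc: "C \<in> carrier U" using assms by (auto simp: ulim_ideal_def)
  obtain a where a: "a \<in> useqs R" "C = cl a" using Cc by (rule in_carrierE)
  have "{n. a n \<in> J n} \<in> F" using assms a ulim_ideal_mem by simp
  then show ?thesis using a by blast
qed

lemma ulim_ideal_ideal: assumes J: "\<And>n. ideal (J n) R"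
  shows "ideal (ulim_ideal R F J) U"
proof -
  interpret UR: ring U by (rule ring_U)
  have sub: "ulim_ideal R F J \<subseteq> carrier U" by (auto simp: ulim_ideal_def)
  have rep: "\<exists>a. a \<in> useqs R \<and> C = cl a \<and> {n. a n \<in> J n} \<in> F" if "C \<in> ulim_ideal R F J" for C
  proof -
    have Cc: "C \<in> carrier U" using that sub by blast
    obtain a where a: "a \<in> useqs R" "C = cl a" using Cc by (rule in_carrierE)
    have "{n. a n \<in> J n} \<in> F" using that a ulim_ideal_mem by simp
    then show ?thesis using a by blast
  qed
  have lc: "x \<otimes>\<^bsub>U\<^esub> C \<in> ulim_ideal R F J" if C: "C \<in> ulim_ideal R F J" and x: "x \<in> carrier U" for C x
  proof -
    obtain a where a: "a \<in> useqs R" "C = cl a" "{n. a n \<in> J n} \<in> F" using rep[OF C] by blast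
    obtain b where b: "b \<in> useqs R" "x = cl b" using x by (rule in_carrierE)
    have "{n. a n \<in> J n} \<subseteq> {n. b n \<otimes> a n \<in> J n}"
      using b(1) ideal.I_l_closed[OF J] by auto
    then have "{n. b n \<otimes> a n \<in> J n} \<in> F" using a(3) F_mono by blast
    then show ?thesis using a b by (simp add: mult_cl ulim_ideal_mem)
  qed
  have rc: "C \<otimes>\<^bsub>U\<^esub> x \<in> ulim_ideal R F J" if C: "C \<in> ulim_ideal R F J" and x: "x \<in> carrier U" for C x
  proof -
    obtain a where a: "a \<in> useqs R" "C = cl a" "{n. a n \<in> J n} \<in> F" using rep[OF C] by blast
    obtain b where b: "b \<in> useqs R" "x = cl b" using x by (rule in_carrierE)
    have "{n. a n \<in> J n} \<subseteq> {n. a n \<otimes> b n \<in> J n}"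
      using b(1) ideal.I_r_closed[OF J] by auto
    then have "{n. a n \<otimes> b n \<in> J n} \<in> F" using a(3) F_mono by blast
    then show ?thesis using a b by (simp add: mult_cl ulim_ideal_mem)
  qed
  have sg: "subgroup (ulim_ideal R F J) (add_monoid U)"
  proof (rule UR.add.subgroupI)
    show "ulim_ideal R F J \<subseteq> carrier U" by (rule sub)
    have "{n. \<zero> \<in> J n} = UNIV"
      using additive_subgroup.zero_closed[OF ideal.axioms(1)[OF J]] by auto
    then have "cl (\<lambda>n. \<zero>) \<in> ulim_ideal R F J"
      using F_UNIV by (subst ulim_ideal_mem) auto
    then show "ulim_ideal R F J \<noteq> {}" by blast
  next
    fix C assume C: "C \<in> ulim_ideal R F J"
    then have "C \<in> carrier U" using sub by blast
    then have "\<ominus>\<^bsub>U\<^esub> C = (\<ominus>\<^bsub>U\<^esub> \<one>\<^bsub>U\<^esub>) \<otimes>\<^bsub>U\<^esub> C" by (simp add: UR.l_minus)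
    then show "\<ominus>\<^bsub>U\<^esub> C \<in> ulim_ideal R F J" using lc[OF C] by simp
  next
    fix C D assume C: "C \<in> ulim_ideal R F J" and D: "D \<in> ulim_ideal R F J"
    obtain a where a: "a \<in> useqs R" "C = cl a" "{n. a n \<in> J n} \<in> F" using rep[OF C] by blast
    obtain b where b: "b \<in> useqs R" "D = cl b" "{n. b n \<in> J n} \<in> F" using rep[OF D] by blast
    have "{n. a n \<in> J n} \<inter> {n. b n \<in> J n} \<subseteq> {n. a n \<oplus> b n \<in> J n}"
      using additive_subgroup.a_closed[OF ideal.axioms(1)[OF J]] by auto
    then have "{n. a n \<oplus> b n \<in> J n} \<in> F" using a(3) b(3) F_sup by blast
    then show "C \<oplus>\<^bsub>U\<^esub> D \<in> ulim_ideal R F J" using a b by (simp add: add_cl ulim_ideal_mem)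
  qed
  show ?thesis by (rule idealI[OF ring_U sg lc rc])
qed

end


theorem lemma4p3:
  fixes R :: "('a, 'b) ring_scheme" and p N :: nat
    and I :: "nat \<Rightarrow> 'a set" and F :: "nat set set"
  assumes "cring R" and "noetherian_ring R"
    and "has_prime_char R p"
    and "\<And>n. \<exists>gs. length gs = N \<and> set gs \<subseteq> carrier R \<and> I n = Idl\<^bsub>R\<^esub> (set gs)"
    and "nonprincipal_ultrafilter F"
  shows "frob_closure (ultrapower R F) p (ulim_ideal R F I)
           \<subseteq> ulim_ideal R F (\<lambda>n. frob_closure R p (I n))"
proof -
  interpret ultra R F using assms(1,5) by (simp add: ultra_def ultra_axioms_def)
  interpret UR: ring "ultrapower R F" by (rule ring_U)
  have pp: "Factorial_Ring.prime p" and ch: "add_pow R p \<one>\<^bsub>R\<^esub> = \<zero>\<^bsub>R\<^esub>"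
    using assms(3) by (simp_all add: has_prime_char_def)
  have Isub: "I n \<subseteq> carrier R" for n
  proof -
    obtain gs where gs: "set gs \<subseteq> carrier R" "I n = Idl\<^bsub>R\<^esub> (set gs)" using assms(4)[of n] by blast
    have "ideal (I n) R" using gs by (simp add: genideal_ideal)
    then show ?thesis by (rule additive_subgroup.a_subset[OF ideal.axioms(1)])
  qed
  show ?thesis
  proof
    fix r assume r: "r \<in> frob_closure (ultrapower R F) p (ulim_ideal R F I)"
    then have rc: "r \<in> carrier (ultrapower R F)" by (simp add: frob_closure_def)
    from r obtain e0 where e0: "\<And>e. e \<ge> e0 \<Longrightarrow> r [^]\<^bsub>ultrapower R F\<^esub> (p ^ e) \<in> frob_power (ultrapower R F) (ulim_ideal R F I) (p ^ e)"
      by (auto simp: frob_closure_def)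
    define q where "q = p ^ e0"
    obtain a where a: "a \<in> useqs R" "r = cl a" using rc by (rule in_carrierE)
    define J where "J n = Idl\<^bsub>R\<^esub> ((\<lambda>z. z [^]\<^bsub>R\<^esub> q) ` I n)" for n
    have Jid: "ideal (J n) R" for n unfolding J_def using Isub[of n] by (intro genideal_ideal) auto
    have "(\<lambda>C. C [^]\<^bsub>ultrapower R F\<^esub> q) ` ulim_ideal R F I \<subseteq> ulim_ideal R F J"
    proof
      fix D assume "D \<in> (\<lambda>C. C [^]\<^bsub>ultrapower R F\<^esub> q) ` ulim_ideal R F I"
      then obtain C where C: "C \<in> ulim_ideal R F I" "D = C [^]\<^bsub>ultrapower R F\<^esub> q" by blast
      obtain b where b: "b \<in> useqs R" "C = cl b" "{n. b n \<in> I n} \<in> F"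
        using ulim_ideal_rep[OF C(1)] by blast
      have "{n. b n \<in> I n} \<subseteq> {n. b n [^]\<^bsub>R\<^esub> q \<in> J n}"
      proof
        fix n assume "n \<in> {n. b n \<in> I n}"
        then have bn: "b n \<in> I n" by simp
        have "(\<lambda>z. z [^]\<^bsub>R\<^esub> q) ` I n \<subseteq> Idl\<^bsub>R\<^esub> ((\<lambda>z. z [^]\<^bsub>R\<^esub> q) ` I n)"
          by (rule genideal_self) (use Isub in auto)
        then show "n \<in> {n. b n [^]\<^bsub>R\<^esub> q \<in> J n}" using bn unfolding J_def by blast
      qed
      then have "{n. b n [^]\<^bsub>R\<^esub> q \<in> J n} \<in> F" using b(3) F_mono by blast
      then show "D \<in> ulim_ideal R F J" using b C(2) by (simp add: pow_cl ulim_ideal_mem)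
    qed
    then have "frob_power (ultrapower R F) (ulim_ideal R F I) q \<subseteq> ulim_ideal R F J"
      unfolding frob_power_def by (rule UR.genideal_minimal[OF ulim_ideal_ideal[OF Jid]])
    moreover have "r [^]\<^bsub>ultrapower R F\<^esub> q \<in> frob_power (ultrapower R F) (ulim_ideal R F I) q"
      unfolding q_def by (rule e0) simp
    ultimately have "cl (\<lambda>n. a n [^]\<^bsub>R\<^esub> q) \<in> ulim_ideal R F J" using a by (auto simp: pow_cl)
    then have FJ: "{n. a n [^]\<^bsub>R\<^esub> q \<in> J n} \<in> F" using a by (simp add: ulim_ideal_mem)
    have "{n. a n [^]\<^bsub>R\<^esub> q \<in> J n} \<subseteq> {n. a n \<in> frob_closure R p (I n)}"
    proof safe
      fix n assume n: "a n [^]\<^bsub>R\<^esub> q \<in> J n"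
      have an: "a n \<in> carrier R" using a by simp
      have "a n [^]\<^bsub>R\<^esub> (p ^ e) \<in> frob_power R (I n) (p ^ e)" if "e \<ge> e0" for e
      proof -
        have pe: "p ^ e = q * p ^ (e - e0)" unfolding q_def using that by (simp add: power_add[symmetric])
        show ?thesis unfolding frob_power_def pe
          by (rule frob_iter[OF pp ch Isub an]) (use n in \<open>simp add: J_def\<close>)
      qed
      then show "a n \<in> frob_closure R p (I n)" using an by (auto simp: frob_closure_def)
    qed
    then have "{n. a n \<in> frob_closure R p (I n)} \<in> F" using FJ F_mono by blast
    then show "r \<in> ulim_ideal R F (\<lambda>n. frob_closure R p (I n))" using a by (simp add: ulim_ideal_mem)
  qed
qed

end
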